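(* Let $P$ be a partial order on $[n]$ which is a disjoint union of chains $c_1,\dots,c_m$ (each $c_r$ totally ordered by $P$, elements of distinct chains incomparable, the $c_r$ partitioning $[n]$), and assign to each chain $c$ a relation $\rho_c\in\{<,>,\le,\ge,=\}$. Call $g\in\widetilde{\mathcal F}_n$ $P$-chain monotone if for every chain $c$ and all $i,j\in c$ with $i<_P j$ one has $g(i)\,\rho_c\,g(j)$. Let $\pi$ be uniform on $\mathrm{PF}_n$ and $f$ uniform on $\widetilde{\mathcal F}_n$. Then $$P\{\pi\text{ is }P\text{-chain monotone}\}=P\{f\text{ is }P\text{-chain monotone}\}.$$ (In particular, with $\rho_c$ equal to $<$ for every chain, $P\{\pi\text{ is }P\text{-monotone}\}=P\{f\text{ is }P\text{-monotone}\}$, where $g$ is $P$-monotone if $i<_Pj$ implies $g(i)<g(j)$.)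
   Context: A parking function of length $n$ is a sequence $(\pi_1,\dots,\pi_n)$ with $1\le\pi_i\le n$ such that $\#\{t:\pi_t\le i\}\ge i$ for all $1\le i\le n$; $\mathrm{PF}_n$ denotes the set of these. $\widetilde{\mathcal F}_n$ is the set of all functions $g:[n]\to[n+1]$, so $\mathrm{PF}_n\subseteq\widetilde{\mathcal F}_n$. *)

theory Defs
  imports Complex_Main "HOL-Library.FuncSet"
begin

definition Ftilde :: "nat \<Rightarrow> (nat \<Rightarrow> nat) set" where
  "Ftilde n = {1..n} \<rightarrow>\<^sub>E {1..n+1}"

definition PF :: "nat \<Rightarrow> (nat \<Rightarrow> nat) set" where
  "PF n = {p \<in> {1..n} \<rightarrow>\<^sub>E {1..n}.
            \<forall>i\<in>{1..n}. card {t \<in> {1..n}. p t \<le> i} \<ge> i}"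

datatype rel = Less | Greater | LessEq | GreaterEq | Equal

fun rel_holds :: "rel \<Rightarrow> nat \<Rightarrow> nat \<Rightarrow> bool" where
  "rel_holds Less a b = (a < b)"
| "rel_holds Greater a b = (a > b)"
| "rel_holds LessEq a b = (a \<le> b)"
| "rel_holds GreaterEq a b = (a \<ge> b)"
| "rel_holds Equal a b = (a = b)"

definition chain_decomposition ::
  "nat \<Rightarrow> (nat \<Rightarrow> nat \<Rightarrow> bool) \<Rightarrow> nat set set \<Rightarrow> bool" where
  "chain_decomposition n P C \<longleftrightarrow>
     (\<forall>x y. P x y \<longrightarrow> x \<in> {1..n} \<and> y \<in> {1..n}) \<and>
     (\<forall>x. \<not> P x x) \<and>
     (\<forall>x y z. P x y \<longrightarrow> P y z \<longrightarrow> P x z) \<and>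
     \<Union>C = {1..n} \<and> {} \<notin> C \<and>
     (\<forall>c\<in>C. \<forall>c'\<in>C. c \<noteq> c' \<longrightarrow> c \<inter> c' = {}) \<and>
     (\<forall>c\<in>C. \<forall>x\<in>c. \<forall>y\<in>c. x \<noteq> y \<longrightarrow> P x y \<or> P y x) \<and>
     (\<forall>c\<in>C. \<forall>c'\<in>C. c \<noteq> c' \<longrightarrow> (\<forall>x\<in>c. \<forall>y\<in>c'. \<not> P x y))"

definition chain_monotone ::
  "(nat \<Rightarrow> nat \<Rightarrow> bool) \<Rightarrow> nat set set \<Rightarrow> (nat set \<Rightarrow> rel) \<Rightarrow> (nat \<Rightarrow> nat) \<Rightarrow> bool" where
  "chain_monotone P C \<rho> g \<longleftrightarrow>
     (\<forall>c\<in>C. \<forall>i\<in>c. \<forall>j\<in>c. P i j \<longrightarrow> rel_holds (\<rho> c) (g i) (g j))"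

end

theory Submission
  imports Defs
begin


definition sh :: "nat \<Rightarrow> nat \<Rightarrow> nat \<Rightarrow> nat" where
  "sh n k v = (if v + k \<le> Suc n then v + k else v + k - Suc n)"

lemma sh_range: "v \<in> {1..Suc n} \<Longrightarrow> k \<le> Suc n \<Longrightarrow> sh n k v \<in> {1..Suc n}"
  unfolding sh_def by auto

lemma sh_inv: "a \<in> {1..Suc n} \<Longrightarrow> v \<in> {1..Suc n} \<Longrightarrow> sh n (a mod Suc n) (sh n (Suc n - a) v) = v"
proof -
  assume a: "a \<in> {1..Suc n}" and v: "v \<in> {1..Suc n}"
  show ?thesis
  proof (cases "a = Suc n")
    case True thus ?thesis using v by (simp add: sh_def)
  next
    case False
    hence "a mod Suc n = a" using a by simp
    thus ?thesis using a v by (simp add: sh_def)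
  qed
qed

lemma sh_inv2: "k \<le> Suc n \<Longrightarrow> v \<in> {1..Suc n} \<Longrightarrow> sh n (Suc n - k) (sh n k v) = v"
  unfolding sh_def by auto

lemma sh_cancel: "k \<le> k' \<Longrightarrow> k' \<le> n \<Longrightarrow> x \<in> {1..Suc n} \<Longrightarrow> y \<in> {1..Suc n}
   \<Longrightarrow> sh n k x = sh n k' y \<Longrightarrow> x = sh n (k' - k) y"
  unfolding sh_def by (auto split: if_splits)

lemma sh_0: "v \<in> {1..Suc n} \<Longrightarrow> sh n 0 v = v"
  unfolding sh_def by auto




definition Phi :: "nat \<Rightarrow> (nat \<Rightarrow> nat) \<times> nat \<Rightarrow> (nat \<Rightarrow> nat)" where
  "Phi n pk = (\<lambda>t. if t \<in> {1..n} then sh n (snd pk) (fst pk t) else undefined)"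

lemma card_split_le:
  fixes f :: "nat \<Rightarrow> nat"
  shows "card {t\<in>{1..n}. f t \<le> a} + card {t\<in>{1..n}. a < f t} = n"
proof -
  have u: "{t\<in>{1..n}. f t \<le> a} \<union> {t\<in>{1..n}. a < f t} = {1..n}" by auto
  have i: "{t\<in>{1..n}. f t \<le> a} \<inter> {t\<in>{1..n}. a < f t} = {}" by auto
  have "card ({t\<in>{1..n}. f t \<le> a} \<union> {t\<in>{1..n}. a < f t}) = card {t\<in>{1..n}. f t \<le> a} + card {t\<in>{1..n}. a < f t}"
    by (rule card_Un_disjoint) (use i in auto)
  thus ?thesis using u by simp
qed

lemma pf_shift_unique:
  assumes p: "\<pi> \<in> PF n" and p': "\<pi>' \<in> PF n" and j: "0 < j" "j \<le> n"
    and eq: "\<forall>t\<in>{1..n}. \<pi> t = sh n j (\<pi>' t)"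
  shows False
proof -
  define a where "a = Suc n - j"
  have a: "a \<in> {1..n}" using j a_def by auto
  have c1: "card {t \<in> {1..n}. \<pi> t \<le> j} \<ge> j" using p j unfolding PF_def by auto
  have pv: "\<forall>t\<in>{1..n}. \<pi>' t \<in> {1..n}" using p' unfolding PF_def by (auto simp: PiE_def Pi_def)
  have "\<forall>t\<in>{1..n}. (\<pi> t \<le> j) = (a < \<pi>' t)"
  proof
    fix t assume t: "t \<in> {1..n}"
    have "\<pi>' t \<in> {1..n}" using pv t by blast
    thus "(\<pi> t \<le> j) = (a < \<pi>' t)" using eq t j unfolding a_def sh_def by auto
  qed
  hence s: "{t \<in> {1..n}. \<pi> t \<le> j} = {t \<in> {1..n}. a < \<pi>' t}" by auto
  have c2: "card {t \<in> {1..n}. \<pi>' t \<le> a} \<ge> a" using p' a unfolding PF_def by auto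
  show False using card_split_le[of n \<pi>' a] a_def j c1 c2 s by simp
qed

lemma PF_vals: "\<pi> \<in> PF n \<Longrightarrow> t \<in> {1..n} \<Longrightarrow> \<pi> t \<in> {1..n}"
  unfolding PF_def by (auto simp: PiE_def Pi_def)

lemma PF_ext: "\<pi> \<in> PF n \<Longrightarrow> \<pi> \<in> extensional {1..n}"
  unfolding PF_def by (auto simp: PiE_def)

lemma Phi_into: "\<pi> \<in> PF n \<Longrightarrow> k \<in> {0..n} \<Longrightarrow> Phi n (\<pi>, k) \<in> Ftilde n"
proof -
  assume p: "\<pi> \<in> PF n" and k: "k \<in> {0..n}"
  have "\<And>t. t \<in> {1..n} \<Longrightarrow> sh n k (\<pi> t) \<in> {1..Suc n}"
  proof -
    fix t assume "t \<in> {1..n}"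
    hence "\<pi> t \<in> {1..Suc n}" using PF_vals[OF p, of t] by auto
    thus "sh n k (\<pi> t) \<in> {1..Suc n}" using sh_range k by auto
  qed
  thus ?thesis unfolding Phi_def Ftilde_def by (auto simp: PiE_def extensional_def Pi_def)
qed

lemma Phi_inj: "inj_on (Phi n) (PF n \<times> {0..n})"
proof (rule inj_onI)
  fix x y assume x: "x \<in> PF n \<times> {0..n}" and y: "y \<in> PF n \<times> {0..n}" and e: "Phi n x = Phi n y"
  obtain p k where xp: "x = (p,k)" by force
  obtain p' k' where yp: "y = (p',k')" by force
  have p: "p \<in> PF n" "k \<le> n" using x xp by auto
  have p': "p' \<in> PF n" "k' \<le> n" using y yp by auto
  have pv: "\<forall>t\<in>{1..n}. p t \<in> {1..Suc n}" using PF_vals[OF p(1)] by fastforce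
  have pv': "\<forall>t\<in>{1..n}. p' t \<in> {1..Suc n}" using PF_vals[OF p'(1)] by fastforce
  have e2: "\<forall>t\<in>{1..n}. sh n k (p t) = sh n k' (p' t)"
  proof
    fix t assume t: "t \<in> {1..n}"
    have "Phi n x t = Phi n y t" using e by simp
    thus "sh n k (p t) = sh n k' (p' t)" using t xp yp unfolding Phi_def by simp
  qed
  have kk: "k = k'"
  proof (rule ccontr)
    assume ne: "k \<noteq> k'"
    show False
    proof (cases "k < k'")
      case True
      have "\<forall>t\<in>{1..n}. p t = sh n (k' - k) (p' t)"
        using e2 sh_cancel[of k k' n] True p' pv pv' by auto
      moreover have "k' - k \<le> n" "0 < k' - k" using p' True by auto
      ultimately show False using pf_shift_unique[of p n p' "k'-k"] p p' by blast
    next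
      case False
      hence lt: "k' < k" using ne by auto
      have "\<forall>t\<in>{1..n}. p' t = sh n (k - k') (p t)"
        using e2 sh_cancel[of k' k n] lt p pv pv' by auto
      moreover have "k - k' \<le> n" "0 < k - k'" using p lt by auto
      ultimately show False using pf_shift_unique[of p' n p "k-k'"] p p' by blast
    qed
  qed
  have "\<forall>t\<in>{1..n}. p t = p' t"
  proof
    fix t assume t: "t \<in> {1..n}"
    have "p t = sh n (k - k) (p' t)"
      using sh_cancel[of k k n "p t" "p' t"] e2 kk pv pv' t p by auto
    thus "p t = p' t" using sh_0 pv' t by auto
  qed
  hence "p = p'" using PF_ext[OF p(1)] PF_ext[OF p'(1)] by (metis extensionalityI)
  thus "x = y" using xp yp kk by simp
qed

lemma Ftilde_vals: "f \<in> Ftilde n \<Longrightarrow> t \<in> {1..n} \<Longrightarrow> f t \<in> {1..Suc n}"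
  unfolding Ftilde_def by (auto simp: PiE_def Pi_def)

lemma Ftilde_ext: "f \<in> Ftilde n \<Longrightarrow> f \<in> extensional {1..n}"
  unfolding Ftilde_def by (auto simp: PiE_def)

lemma exists_first_min:
  fixes D :: "nat \<Rightarrow> int"
  shows "\<exists>a\<in>{1..Suc n}. (\<forall>b\<in>{1..Suc n}. D a \<le> D b) \<and> (\<forall>b\<in>{1..Suc n}. b < a \<longrightarrow> D a < D b)"
proof -
  define M where "M = Min (D ` {1..Suc n})"
  have M1: "M \<in> D ` {1..Suc n}" unfolding M_def by (rule Min_in) auto
  have M2: "\<forall>b\<in>{1..Suc n}. M \<le> D b" unfolding M_def by auto
  define A where "A = {b\<in>{1..Suc n}. D b = M}"
  have An: "A \<noteq> {}" using M1 unfolding A_def by auto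
  have Af: "finite A" unfolding A_def by auto
  define a where "a = Min A"
  have aA: "a \<in> A" unfolding a_def using An Af by (rule Min_in[rotated]) 
  have amin: "\<forall>b\<in>A. a \<le> b" unfolding a_def using Af by auto
  show ?thesis
  proof (rule bexI[of _ a])
    show "a \<in> {1..Suc n}" using aA A_def by auto
    have Da: "D a = M" using aA A_def by auto
    show "(\<forall>b\<in>{1..Suc n}. D a \<le> D b) \<and> (\<forall>b\<in>{1..Suc n}. b < a \<longrightarrow> D a < D b)"
    proof (intro conjI ballI impI)
      fix b assume "b \<in> {1..Suc n}" thus "D a \<le> D b" using M2 Da by auto
    next
      fix b assume b: "b \<in> {1..Suc n}" "b < a"
      hence "b \<notin> A" using amin by force
      hence "D b \<noteq> M" using b A_def by auto
      thus "D a < D b" using M2 b Da by force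
    qed
  qed
qed

lemma sh_case1: "v \<in> {1..Suc n} \<Longrightarrow> a \<in> {1..Suc n} \<Longrightarrow> i + a \<le> Suc n \<Longrightarrow> 1 \<le> i \<Longrightarrow>
   (sh n (Suc n - a) v \<le> i) = (a < v \<and> v \<le> a + i)"
  unfolding sh_def atLeastAtMost_iff by (split if_split) arith

lemma sh_case2: "v \<in> {1..Suc n} \<Longrightarrow> a \<le> Suc n \<Longrightarrow> Suc n < i + a \<Longrightarrow> i \<le> n \<Longrightarrow>
   (sh n (Suc n - a) v \<le> i) = (a < v \<or> v \<le> i + a - Suc n)"
  unfolding sh_def atLeastAtMost_iff by (split if_split) arith

lemma sh_ne: "v \<in> {1..Suc n} \<Longrightarrow> v \<noteq> a \<Longrightarrow> a \<in> {1..Suc n} \<Longrightarrow> sh n (Suc n - a) v \<noteq> Suc n"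
  unfolding sh_def atLeastAtMost_iff by (split if_split) arith

lemma Phi_surj:
  assumes f: "f \<in> Ftilde n"
  shows "\<exists>x\<in>PF n \<times> {0..n}. Phi n x = f"
proof -
  have fv: "\<And>t. t \<in> {1..n} \<Longrightarrow> f t \<in> {1..Suc n}" using Ftilde_vals[OF f] by blast
  define Cn where "Cn x = card {t\<in>{1..n}. f t \<le> x}" for x
  define D where "D x = int (Cn x) - int x" for x
  obtain a where a: "a \<in> {1..Suc n}" and amin: "\<forall>b\<in>{1..Suc n}. D a \<le> D b"
    and afirst: "\<forall>b\<in>{1..Suc n}. b < a \<longrightarrow> D a < D b"
    using exists_first_min[of n D] by blast
  have CnSuc: "Cn (Suc n) = n"
  proof -
    have "{t\<in>{1..n}. f t \<le> Suc n} = {1..n}" using fv by auto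
    thus ?thesis unfolding Cn_def by simp
  qed
  have Cnle: "Cn x \<le> n" for x
  proof -
    have "{t\<in>{1..n}. f t \<le> x} \<subseteq> {1..n}" by auto
    hence "card {t\<in>{1..n}. f t \<le> x} \<le> card {1..n}" by (rule card_mono[rotated]) auto
    thus ?thesis unfolding Cn_def by simp
  qed
  have Cnmono: "x \<le> y \<Longrightarrow> Cn x \<le> Cn y" for x y
  proof -
    assume "x \<le> y"
    hence "{t\<in>{1..n}. f t \<le> x} \<subseteq> {t\<in>{1..n}. f t \<le> y}" by auto
    thus ?thesis unfolding Cn_def by (rule card_mono[rotated]) auto
  qed
  have noa: "\<forall>t\<in>{1..n}. f t \<noteq> a"
  proof (intro ballI notI)
    fix t assume t: "t \<in> {1..n}" and ft: "f t = a"
    show False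
    proof (cases "a = 1")
      case True
      have "D a \<le> D (Suc n)" using amin by auto
      hence "Cn 1 = 0" using CnSuc True unfolding D_def by simp
      moreover have "t \<in> {t\<in>{1..n}. f t \<le> 1}" using t ft True by auto
      ultimately show False unfolding Cn_def by (simp add: card_eq_0_iff) blast
    next
      case False
      hence a2: "a - 1 \<in> {1..Suc n}" "a - 1 < a" using a by auto
      hence "D a < D (a - 1)" using afirst by blast
      hence lt: "Cn a \<le> Cn (a - 1)" using a unfolding D_def by simp
      have m1: "t \<in> {t\<in>{1..n}. f t \<le> a}" "t \<notin> {t\<in>{1..n}. f t \<le> a - 1}" using t ft a2 by auto
      have "{t\<in>{1..n}. f t \<le> a - 1} \<subseteq> {t\<in>{1..n}. f t \<le> a}" by auto
      hence "{t\<in>{1..n}. f t \<le> a - 1} \<subset> {t\<in>{1..n}. f t \<le> a}" using m1 by blast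
      hence "Cn (a - 1) < Cn a" unfolding Cn_def by (rule psubset_card_mono[rotated]) auto
      thus False using lt by simp
    qed
  qed
  define k where "k = Suc n - a"
  define \<pi> where "\<pi> = (\<lambda>t. if t \<in> {1..n} then sh n k (f t) else undefined)"
  have piv: "\<pi> t \<in> {1..n}" if t: "t \<in> {1..n}" for t
  proof -
    have v: "f t \<in> {1..Suc n}" "f t \<noteq> a" using fv noa t by auto
    have "sh n k (f t) \<in> {1..Suc n}" using sh_range v k_def by auto
    moreover have "sh n k (f t) \<noteq> Suc n" using sh_ne[OF v(1) v(2) a] k_def by simp
    ultimately show ?thesis using t unfolding \<pi>_def by auto
  qed
  have piPF: "\<pi> \<in> PF n"
    unfolding PF_def
  proof (intro CollectI conjI ballI)
    show "\<pi> \<in> {1..n} \<rightarrow>\<^sub>E {1..n}" using piv unfolding \<pi>_def by (auto simp: PiE_def Pi_def extensional_def)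
  next
    fix i assume i: "i \<in> {1..n}"
    show "i \<le> card {t\<in>{1..n}. \<pi> t \<le> i}"
    proof (cases "i + a \<le> Suc n")
      case True
      have "{t\<in>{1..n}. \<pi> t \<le> i} = {t\<in>{1..n}. f t \<le> a + i} - {t\<in>{1..n}. f t \<le> a}"
      proof (rule set_eqI)
        fix t show "t \<in> {t\<in>{1..n}. \<pi> t \<le> i} \<longleftrightarrow> t \<in> {t\<in>{1..n}. f t \<le> a + i} - {t\<in>{1..n}. f t \<le> a}"
        proof (cases "t \<in> {1..n}")
          case tt: True
          have "f t \<in> {1..Suc n}" using fv tt by auto
          thus ?thesis using tt sh_case1[of "f t" n a i] a True i unfolding \<pi>_def k_def by auto
        qed auto
      qed
      hence "card {t\<in>{1..n}. \<pi> t \<le> i} = Cn (a + i) - Cn a"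
        unfolding Cn_def by (simp add: card_Diff_subset subset_iff)
      moreover have "D a \<le> D (a + i)" using amin True i by auto
      ultimately show ?thesis unfolding D_def using Cnmono[of a "a+i"] by simp
    next
      case False
      define i' where "i' = i + a - Suc n"
      have i': "i' \<in> {1..Suc n}" "i' < a" using False i a i'_def by auto
      have eq: "{t\<in>{1..n}. \<pi> t \<le> i} = {t\<in>{1..n}. a < f t} \<union> {t\<in>{1..n}. f t \<le> i'}"
      proof (rule set_eqI)
        fix t show "t \<in> {t\<in>{1..n}. \<pi> t \<le> i} \<longleftrightarrow> t \<in> {t\<in>{1..n}. a < f t} \<union> {t\<in>{1..n}. f t \<le> i'}"
        proof (cases "t \<in> {1..n}")
          case tt: True
          have "f t \<in> {1..Suc n}" using fv tt by auto
          thus ?thesis using tt sh_case2[of "f t" n a i] a False i i'_def unfolding \<pi>_def k_def by auto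
        qed auto
      qed
      have "card ({t\<in>{1..n}. a < f t} \<union> {t\<in>{1..n}. f t \<le> i'}) = card {t\<in>{1..n}. a < f t} + card {t\<in>{1..n}. f t \<le> i'}"
        by (rule card_Un_disjoint) (use i' in auto)
      hence "card {t\<in>{1..n}. \<pi> t \<le> i} = (n - Cn a) + Cn i'"
        using eq card_split_le[of n f a] unfolding Cn_def by simp
      moreover have "D a < D i'" using afirst i' by blast
      ultimately show ?thesis unfolding D_def using Cnle[of a] i'_def False by simp
    qed
  qed
  show ?thesis
  proof (rule bexI[of _ "(\<pi>, a mod Suc n)"])
    show "(\<pi>, a mod Suc n) \<in> PF n \<times> {0..n}" using piPF by auto
    show "Phi n (\<pi>, a mod Suc n) = f"
    proof (rule ext)
      fix t show "Phi n (\<pi>, a mod Suc n) t = f t"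
      proof (cases "t \<in> {1..n}")
        case True thus ?thesis unfolding Phi_def \<pi>_def k_def using sh_inv[OF a fv[OF True]] by simp
      next
        case False thus ?thesis unfolding Phi_def using Ftilde_ext[OF f] by (auto simp: extensional_def)
      qed
    qed
  qed
qed

lemma Phi_bij: "bij_betw (Phi n) (PF n \<times> {0..n}) (Ftilde n)"
  unfolding bij_betw_def
proof
  show "inj_on (Phi n) (PF n \<times> {0..n})" by (rule Phi_inj)
  show "Phi n ` (PF n \<times> {0..n}) = Ftilde n"
  proof
    show "Phi n ` (PF n \<times> {0..n}) \<subseteq> Ftilde n" using Phi_into by auto
    show "Ftilde n \<subseteq> Phi n ` (PF n \<times> {0..n})"
    proof
      fix f assume "f \<in> Ftilde n"
      then obtain x where "x \<in> PF n \<times> {0..n}" "Phi n x = f" using Phi_surj by blast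
      thus "f \<in> Phi n ` (PF n \<times> {0..n})" by blast
    qed
  qed
qed




definition rot :: "rel \<Rightarrow> nat \<Rightarrow> nat \<Rightarrow> nat" where
  "rot R m u = (if R = Greater \<or> R = GreaterEq then u else m - u)"

lemma same_side:
  assumes sm: "x < y \<Longrightarrow> s x < s y" "y < x \<Longrightarrow> s y < s x"
    and h: "rel_holds R x y"
  shows "rel_holds R (s x) (s y)"
proof (cases R)
  case Less thus ?thesis using h sm by simp
next
  case Greater thus ?thesis using h sm by simp
next
  case LessEq thus ?thesis using h sm by (cases "x = y") auto
next
  case GreaterEq thus ?thesis using h sm by (cases "x = y") auto
next
  case Equal thus ?thesis using h by simp
qed

lemma up_closed_char:
  assumes up: "\<And>p q. Q p \<Longrightarrow> p < q \<Longrightarrow> q < m \<Longrightarrow> Q q" and p: "p < m"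
  shows "Q p \<longleftrightarrow> m - card {p\<in>{0..<m}. Q p} \<le> p"
proof
  assume "Q p"
  hence "{p..<m} \<subseteq> {p\<in>{0..<m}. Q p}" using up by (auto simp: le_less)
  hence "card {p..<m} \<le> card {p\<in>{0..<m}. Q p}" by (rule card_mono[rotated]) auto
  thus "m - card {p\<in>{0..<m}. Q p} \<le> p" by simp
next
  assume h: "m - card {p\<in>{0..<m}. Q p} \<le> p"
  show "Q p"
  proof (rule ccontr)
    assume nq: "\<not> Q p"
    have "{p\<in>{0..<m}. Q p} \<subseteq> {Suc p..<m}"
    proof
      fix x assume x: "x \<in> {p\<in>{0..<m}. Q p}"
      have "\<not> x \<le> p"
      proof
        assume "x \<le> p"
        thus False using x nq up[of x p] p by (cases "x = p") auto
      qed
      thus "x \<in> {Suc p..<m}" using x by auto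
    qed
    hence "card {p\<in>{0..<m}. Q p} \<le> card {Suc p..<m}" by (rule card_mono[rotated]) auto
    thus False using h p by simp
  qed
qed

lemma down_closed_char:
  assumes down: "\<And>p q. Q q \<Longrightarrow> p < q \<Longrightarrow> q < m \<Longrightarrow> Q p" and p: "p < m"
  shows "Q p \<longleftrightarrow> p < card {p\<in>{0..<m}. Q p}"
proof
  assume "Q p"
  hence "{0..p} \<subseteq> {p\<in>{0..<m}. Q p}" using down p by (auto simp: le_less)
  hence "card {0..p} \<le> card {p\<in>{0..<m}. Q p}" by (rule card_mono[rotated]) auto
  thus "p < card {p\<in>{0..<m}. Q p}" by simp
next
  assume h: "p < card {p\<in>{0..<m}. Q p}"
  show "Q p"
  proof (rule ccontr)
    assume nq: "\<not> Q p"
    have "{p\<in>{0..<m}. Q p} \<subseteq> {0..<p}"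
    proof
      fix x assume x: "x \<in> {p\<in>{0..<m}. Q p}"
      have "\<not> p \<le> x"
      proof
        assume "p \<le> x"
        thus False using x nq down[of x p] p by (cases "x = p") auto
      qed
      thus "x \<in> {0..<p}" by auto
    qed
    hence "card {p\<in>{0..<m}. Q p} \<le> card {0..<p}" by (rule card_mono[rotated]) auto
    thus False using h by simp
  qed
qed

lemma mod_rot1: "(p::nat) < m \<Longrightarrow> u \<le> m \<Longrightarrow> (p + (m - u)) mod m = (if p < u then p + (m - u) else p - u)"
proof -
  assume a: "p < m" "u \<le> m"
  show ?thesis
  proof (cases "p < u")
    case True thus ?thesis using a by (simp add: mod_less)
  next
    case False
    hence "p + (m - u) = (p - u) + m" using a by simp
    hence "(p + (m - u)) mod m = (p - u) mod m" by (metis mod_add_self2)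
    moreover have "p - u < m" using a by simp
    ultimately show ?thesis using False by simp
  qed
qed

lemma mod_rot2: "(p::nat) < m \<Longrightarrow> u \<le> m \<Longrightarrow> (p + u) mod m = (if p + u < m then p + u else p + u - m)"
proof -
  assume a: "p < m" "u \<le> m"
  show ?thesis
  proof (cases "p + u < m")
    case True thus ?thesis using a by (simp add: mod_less)
  next
    case False
    hence "p + u = (p + u - m) + m" using a by simp
    hence "(p + u) mod m = (p + u - m) mod m" by (metis mod_add_self2)
    moreover have "p + u - m < m" using a by simp
    ultimately show ?thesis using False by simp
  qed
qed

lemma seq_rot:
  fixes v :: "nat \<Rightarrow> nat" and s :: "nat \<Rightarrow> nat"
  assumes V: "\<And>p. p < m \<Longrightarrow> v p \<in> V"
    and sa: "\<And>x y. x \<in> V \<Longrightarrow> y \<in> V \<Longrightarrow> x \<le> \<theta> \<Longrightarrow> y \<le> \<theta> \<Longrightarrow> x < y \<Longrightarrow> s x < s y"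
    and sb: "\<And>x y. x \<in> V \<Longrightarrow> y \<in> V \<Longrightarrow> \<theta> < x \<Longrightarrow> \<theta> < y \<Longrightarrow> x < y \<Longrightarrow> s x < s y"
    and sc: "\<And>x y. x \<in> V \<Longrightarrow> y \<in> V \<Longrightarrow> x \<le> \<theta> \<Longrightarrow> \<theta> < y \<Longrightarrow> s y < s x"
    and mono: "\<And>p q. p < q \<Longrightarrow> q < m \<Longrightarrow> rel_holds R (v p) (v q)"
    and u: "u = card {p \<in> {0..<m}. \<theta> < v p}"
    and pq: "p < q" "q < m"
  shows "rel_holds R (s (v ((p + rot R m u) mod m))) (s (v ((q + rot R m u) mod m)))"
proof -
  have "card {p \<in> {0..<m}. \<theta> < v p} \<le> card {0..<m}" by (rule card_mono) auto
  hence um: "u \<le> m" using u by simp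
  have same: "rel_holds R (s (v p')) (s (v q'))" if "p' < q'" "q' < m" "(\<theta> < v p') = (\<theta> < v q')" for p' q'
  proof (rule same_side[of "v p'" "v q'" s])
    show "rel_holds R (v p') (v q')" using mono that by blast
    have vv: "v p' \<in> V" "v q' \<in> V" using V that by auto
    show "v p' < v q' \<Longrightarrow> s (v p') < s (v q')"
      using sa[OF vv] sb[OF vv] that(3) by (cases "\<theta> < v p'") auto
    show "v q' < v p' \<Longrightarrow> s (v q') < s (v p')"
      using sa[OF vv(2) vv(1)] sb[OF vv(2) vv(1)] that(3) by (cases "\<theta> < v p'") auto
  qed
  consider "R = Equal" | "R = Less \<or> R = LessEq" | "R = Greater \<or> R = GreaterEq" by (cases R) auto
  thus ?thesis
  proof cases
    case 1
    have va: "v a = v b" if "a < m" "b < m" for a b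
    proof (cases a b rule: linorder_cases)
      case less thus ?thesis using mono[of a b] that 1 by simp
    next
      case greater thus ?thesis using mono[of b a] that 1 by simp
    qed simp
    have m0: "0 < m" using pq by simp
    have "(p + rot R m u) mod m < m" "(q + rot R m u) mod m < m" using m0 by simp_all
    hence "v ((p + rot R m u) mod m) = v ((q + rot R m u) mod m)" by (rule va)
    thus ?thesis using 1 by simp
  next
    case L: 2
    hence incr: "rel_holds R x y \<Longrightarrow> x \<le> y" for x y by auto
    have hr: "rel_holds R (s x) (s y)" if "s x < s y" for x y using that L by auto
    have ch: "\<theta> < v a \<longleftrightarrow> m - u \<le> a" if "a < m" for a
      unfolding u
    proof (rule up_closed_char[OF _ that])
      fix a b assume "\<theta> < v a" "a < b" "b < m" thus "\<theta> < v b" using incr[OF mono[of a b]] by simp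
    qed
    have r: "rot R m u = m - u" using L rot_def by auto
    have ep: "(p + rot R m u) mod m = (if p < u then p + (m - u) else p - u)"
      unfolding r by (rule mod_rot1) (use pq um in auto)
    have eq: "(q + rot R m u) mod m = (if q < u then q + (m - u) else q - u)"
      unfolding r by (rule mod_rot1) (use pq um in auto)
    consider "q < u" | "u \<le> p" | "p < u" "u \<le> q" using pq by linarith
    thus ?thesis
    proof cases
      case 1
      have i: "p + (m - u) < q + (m - u)" "q + (m - u) < m" using pq 1 um by auto
      have "\<theta> < v (p + (m - u))" using ch[of "p + (m - u)"] i by simp
      moreover have "\<theta> < v (q + (m - u))" using ch[of "q + (m - u)"] i by simp
      ultimately have "rel_holds R (s (v (p + (m - u)))) (s (v (q + (m - u))))" using same[OF i] by simp
      thus ?thesis using ep eq 1 pq by simp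
    next
      case 2
      have i: "p - u < q - u" "q - u < m" using pq 2 um by auto
      have "\<not> \<theta> < v (p - u)" using ch[of "p - u"] i 2 pq by simp
      moreover have "\<not> \<theta> < v (q - u)" using ch[of "q - u"] i 2 pq by simp
      ultimately have "rel_holds R (s (v (p - u))) (s (v (q - u)))" using same[OF i] by simp
      thus ?thesis using ep eq 2 pq by simp
    next
      case 3
      have i: "p + (m - u) < m" "q - u < m" using pq 3 um by auto
      have a1: "\<theta> < v (p + (m - u))" using ch[of "p + (m - u)"] i by simp
      have a2: "\<not> \<theta> < v (q - u)" using ch[of "q - u"] i 3 pq by simp
      have "s (v (p + (m - u))) < s (v (q - u))"
        using sc[OF V[OF i(2)] V[OF i(1)]] a1 a2 by simp
      hence "rel_holds R (s (v (p + (m - u)))) (s (v (q - u)))" by (rule hr)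
      thus ?thesis using ep eq 3 by simp
    qed
  next
    case G: 3
    hence decr: "rel_holds R x y \<Longrightarrow> y \<le> x" for x y by auto
    have hr: "rel_holds R (s x) (s y)" if "s y < s x" for x y using that G by auto
    have ch: "\<theta> < v a \<longleftrightarrow> a < u" if "a < m" for a
      unfolding u
    proof (rule down_closed_char[OF _ that])
      fix a b assume "\<theta> < v b" "a < b" "b < m" thus "\<theta> < v a" using decr[OF mono[of a b]] by simp
    qed
    have r: "rot R m u = u" using G rot_def by auto
    have ep: "(p + rot R m u) mod m = (if p + u < m then p + u else p + u - m)"
      unfolding r by (rule mod_rot2) (use pq um in auto)
    have eq: "(q + rot R m u) mod m = (if q + u < m then q + u else q + u - m)"
      unfolding r by (rule mod_rot2) (use pq um in auto)
    consider "q + u < m" | "m \<le> p + u" | "p + u < m" "m \<le> q + u" using pq by linarith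
    thus ?thesis
    proof cases
      case 1
      have i: "p + u < q + u" "q + u < m" using pq 1 um by auto
      have "\<not> \<theta> < v (p + u)" using ch[of "p + u"] i by simp
      moreover have "\<not> \<theta> < v (q + u)" using ch[of "q + u"] i by simp
      ultimately have "rel_holds R (s (v (p + u))) (s (v (q + u)))" using same[OF i] by simp
      thus ?thesis using ep eq 1 pq by simp
    next
      case 2
      have i: "p + u - m < q + u - m" "q + u - m < m" using pq 2 um by auto
      have "\<theta> < v (p + u - m)" using ch[of "p + u - m"] i 2 pq by simp
      moreover have "\<theta> < v (q + u - m)" using ch[of "q + u - m"] i 2 pq by simp
      ultimately have "rel_holds R (s (v (p + u - m))) (s (v (q + u - m)))" using same[OF i] by simp
      thus ?thesis using ep eq 2 pq by simp
    next
      case 3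
      have i: "p + u < m" "q + u - m < m" using pq 3 um by auto
      have a1: "\<not> \<theta> < v (p + u)" using ch[of "p + u"] i by simp
      have a2: "\<theta> < v (q + u - m)" using ch[of "q + u - m"] i 3 pq by simp
      have "s (v (q + u - m)) < s (v (p + u))"
        using sc[OF V[OF i(1)] V[OF i(2)]] a1 a2 by simp
      hence "rel_holds R (s (v (p + u))) (s (v (q + u - m)))" by (rule hr)
      thus ?thesis using ep eq 3 by simp
    qed
  qed
qed




lemma bij_filter: "bij_betw f A B \<Longrightarrow> bij_betw f {x\<in>A. Q (f x)} {y\<in>B. Q y}"
proof -
  assume b: "bij_betw f A B"
  have "inj_on f {x\<in>A. Q (f x)}" using bij_betw_imp_inj_on[OF b] by (rule inj_on_subset) auto
  moreover have "f ` {x\<in>A. Q (f x)} = {y\<in>B. Q y}"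
  proof
    show "f ` {x\<in>A. Q (f x)} \<subseteq> {y\<in>B. Q y}" using bij_betw_imp_surj_on[OF b] by auto
    show "{y\<in>B. Q y} \<subseteq> f ` {x\<in>A. Q (f x)}"
    proof
      fix y assume y: "y \<in> {y\<in>B. Q y}"
      have "y \<in> f ` A" using y bij_betw_imp_surj_on[OF b] by simp
      then obtain x where "x \<in> A" "f x = y" by blast
      thus "y \<in> f ` {x\<in>A. Q (f x)}" using y by auto
    qed
  qed
  ultimately show ?thesis unfolding bij_betw_def by simp
qed

lemma rot_bij: "bij_betw (\<lambda>i. (i + r) mod m) {0..<m} {0..<(m::nat)}"
proof (cases "m = 0")
  case True thus ?thesis by (simp add: bij_betw_def)
next
  case False
  have inj: "inj_on (\<lambda>i. (i + r) mod m) {0..<m}"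
  proof (rule inj_onI)
    fix i j assume i: "i \<in> {0..<m}" and j: "j \<in> {0..<m}" and e: "(i + r) mod m = (j + r) mod m"
    have rm: "r mod m \<le> m" using False by (simp add: less_imp_le)
    have "(i + r) mod m = (i + r mod m) mod m" "(j + r) mod m = (j + r mod m) mod m"
      by (simp_all add: mod_add_right_eq)
    hence "(if i + r mod m < m then i + r mod m else i + r mod m - m) = (if j + r mod m < m then j + r mod m else j + r mod m - m)"
      using e mod_rot2[of i m "r mod m"] mod_rot2[of j m "r mod m"] i j rm by simp
    thus "i = j" using i j rm by (auto split: if_splits)
  qed
  moreover have sub: "(\<lambda>i. (i + r) mod m) ` {0..<m} \<subseteq> {0..<m}"
  proof
    fix y assume "y \<in> (\<lambda>i. (i + r) mod m) ` {0..<m}"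
    then obtain i where "y = (i + r) mod m" by blast
    thus "y \<in> {0..<m}" using False by simp
  qed
  ultimately have "(\<lambda>i. (i + r) mod m) ` {0..<m} = {0..<m}" using endo_inj_surj[of "{0..<m}"] by blast
  thus ?thesis unfolding bij_betw_def using inj by blast
qed

locale chdec =
  fixes n :: nat and P :: "nat \<Rightarrow> nat \<Rightarrow> bool" and C :: "nat set set"
  assumes cd: "chain_decomposition n P C"
begin

lemma cd': "(\<forall>x y. P x y \<longrightarrow> x \<in> {1..n} \<and> y \<in> {1..n}) \<and>
     (\<forall>x. \<not> P x x) \<and>
     (\<forall>x y z. P x y \<longrightarrow> P y z \<longrightarrow> P x z) \<and>
     \<Union>C = {1..n} \<and> {} \<notin> C \<and>
     (\<forall>c\<in>C. \<forall>c'\<in>C. c \<noteq> c' \<longrightarrow> c \<inter> c' = {}) \<and>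
     (\<forall>c\<in>C. \<forall>x\<in>c. \<forall>y\<in>c. x \<noteq> y \<longrightarrow> P x y \<or> P y x) \<and>
     (\<forall>c\<in>C. \<forall>c'\<in>C. c \<noteq> c' \<longrightarrow> (\<forall>x\<in>c. \<forall>y\<in>c'. \<not> P x y))"
  using cd unfolding chain_decomposition_def .

lemma Pin: "P x y \<Longrightarrow> x \<in> {1..n} \<and> y \<in> {1..n}" using conjunct1[OF cd'] by simp
lemma irr: "\<not> P x x" using conjunct1[OF conjunct2[OF cd']] by simp
lemma trn: "P x y \<Longrightarrow> P y z \<Longrightarrow> P x z" using conjunct1[OF conjunct2[OF conjunct2[OF cd']]] by blast
lemma UC: "\<Union>C = {1..n}" using conjunct1[OF conjunct2[OF conjunct2[OF conjunct2[OF cd']]]] by simp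
lemma disj: "c \<in> C \<Longrightarrow> c' \<in> C \<Longrightarrow> c \<noteq> c' \<Longrightarrow> c \<inter> c' = {}"
  using conjunct1[OF conjunct2[OF conjunct2[OF conjunct2[OF conjunct2[OF conjunct2[OF cd']]]]]] by blast
lemma tot: "c \<in> C \<Longrightarrow> x \<in> c \<Longrightarrow> y \<in> c \<Longrightarrow> x \<noteq> y \<Longrightarrow> P x y \<or> P y x"
  using conjunct1[OF conjunct2[OF conjunct2[OF conjunct2[OF conjunct2[OF conjunct2[OF conjunct2[OF cd']]]]]]] by blast

lemma chain_sub: "c \<in> C \<Longrightarrow> c \<subseteq> {1..n}" using UC by blast
lemma chain_fin: "c \<in> C \<Longrightarrow> finite c" using chain_sub finite_subset by blast
lemma chain_uniq: "c \<in> C \<Longrightarrow> c' \<in> C \<Longrightarrow> x \<in> c \<Longrightarrow> x \<in> c' \<Longrightarrow> c = c'" using disj by blast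

definition rank :: "nat set \<Rightarrow> nat \<Rightarrow> nat" where "rank c x = card {y\<in>c. P y x}"
definition ev :: "nat set \<Rightarrow> nat \<Rightarrow> nat" where "ev c = inv_into c (rank c)"

lemma rank_lt: assumes c: "c \<in> C" and xy: "x \<in> c" "y \<in> c" "P x y" shows "rank c x < rank c y"
proof -
  have "{z\<in>c. P z x} \<subseteq> {z\<in>c. P z y}" using trn xy by blast
  moreover have "x \<in> {z\<in>c. P z y}" "x \<notin> {z\<in>c. P z x}" using xy irr by auto
  ultimately have "{z\<in>c. P z x} \<subset> {z\<in>c. P z y}" by blast
  thus ?thesis unfolding rank_def using chain_fin[OF c] by (simp add: psubset_card_mono)
qed

lemma rank_range: assumes c: "c \<in> C" and x: "x \<in> c" shows "rank c x < card c"
proof -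
  have "{z\<in>c. P z x} \<subset> c" using x irr by blast
  thus ?thesis unfolding rank_def using chain_fin[OF c] by (simp add: psubset_card_mono)
qed

lemma rank_iff: assumes c: "c \<in> C" and xy: "x \<in> c" "y \<in> c" shows "P x y \<longleftrightarrow> rank c x < rank c y"
proof
  assume "P x y" thus "rank c x < rank c y" using rank_lt c xy by blast
next
  assume r: "rank c x < rank c y"
  show "P x y"
  proof (rule ccontr)
    assume np: "\<not> P x y"
    have "x \<noteq> y" using r by auto
    hence "P y x" using tot[OF c xy] np by blast
    thus False using rank_lt[OF c xy(2) xy(1)] r by simp
  qed
qed

lemma rank_inj: "c \<in> C \<Longrightarrow> inj_on (rank c) c"
proof (rule inj_onI)
  fix x y assume c: "c \<in> C" and xy: "x \<in> c" "y \<in> c" "rank c x = rank c y"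
  show "x = y"
  proof (rule ccontr)
    assume "x \<noteq> y"
    hence "P x y \<or> P y x" using tot[OF c xy(1,2)] by blast
    thus False using rank_lt[OF c xy(1,2)] rank_lt[OF c xy(2,1)] xy(3) by auto
  qed
qed

lemma rank_bij: assumes c: "c \<in> C" shows "bij_betw (rank c) c {0..<card c}"
proof -
  have i: "inj_on (rank c) c" by (rule rank_inj[OF c])
  have s: "rank c ` c \<subseteq> {0..<card c}" using rank_range[OF c] by auto
  have "card (rank c ` c) = card {0..<card c}" using card_image[OF i] by simp
  hence "rank c ` c = {0..<card c}" using s by (simp add: card_subset_eq)
  thus ?thesis using i unfolding bij_betw_def by simp
qed

lemma ev_bij: "c \<in> C \<Longrightarrow> bij_betw (ev c) {0..<card c} c"
  unfolding ev_def by (rule bij_betw_inv_into[OF rank_bij])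

lemma ev_in: "c \<in> C \<Longrightarrow> p < card c \<Longrightarrow> ev c p \<in> c"
  using ev_bij bij_betw_apply by fastforce

lemma rank_ev: assumes c: "c \<in> C" and p: "p < card c" shows "rank c (ev c p) = p"
proof -
  have "p \<in> rank c ` c" using bij_betw_imp_surj_on[OF rank_bij[OF c]] p by auto
  thus ?thesis unfolding ev_def by (rule f_inv_into_f)
qed

lemma ev_rank: "c \<in> C \<Longrightarrow> x \<in> c \<Longrightarrow> ev c (rank c x) = x"
  unfolding ev_def using rank_inj by (simp add: inv_into_f_f)

definition chof :: "nat \<Rightarrow> nat set" where "chof x = (THE c. c \<in> C \<and> x \<in> c)"

lemma chof_eq: "c \<in> C \<Longrightarrow> x \<in> c \<Longrightarrow> chof x = c"
  unfolding chof_def by (rule the_equality) (use chain_uniq in blast)+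

lemma in_chain: "x \<in> {1..n} \<Longrightarrow> \<exists>c\<in>C. x \<in> c" using UC by blast

definition psi :: "(nat set \<Rightarrow> nat) \<Rightarrow> nat \<Rightarrow> nat" where
  "psi r x = (if x \<in> {1..n} then ev (chof x) ((rank (chof x) x + r (chof x)) mod card (chof x)) else x)"

lemma psi_on: assumes c: "c \<in> C" and x: "x \<in> c"
  shows "psi r x = ev c ((rank c x + r c) mod card c)"
proof -
  have x': "x \<in> {1..n}" using chain_sub[OF c] x by blast
  have ch: "chof x = c" using chof_eq[OF c x] .
  have "psi r x = ev (chof x) ((rank (chof x) x + r (chof x)) mod card (chof x))"
    unfolding psi_def using x' by (simp only: if_True)
  thus ?thesis unfolding ch .
qed

lemma psi_bij: assumes c: "c \<in> C" shows "bij_betw (psi r) c c"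
proof -
  have b: "bij_betw (ev c \<circ> ((\<lambda>i. (i + r c) mod card c) \<circ> rank c)) c c"
    by (rule bij_betw_trans[OF bij_betw_trans[OF rank_bij[OF c] rot_bij] ev_bij[OF c]])
  have eq: "\<And>x. x \<in> c \<Longrightarrow> (ev c \<circ> ((\<lambda>i. (i + r c) mod card c) \<circ> rank c)) x = psi r x"
    using psi_on[OF c] by (simp only: o_apply)
  have "bij_betw (ev c \<circ> ((\<lambda>i. (i + r c) mod card c) \<circ> rank c)) c c = bij_betw (psi r) c c"
    by (rule bij_betw_cong) (use eq in blast)
  thus ?thesis using b by blast
qed

lemma psi_out: "x \<notin> {1..n} \<Longrightarrow> psi r x = x" unfolding psi_def by auto

definition G :: "(nat \<Rightarrow> nat) set" where
  "G = {\<sigma>. (\<forall>c\<in>C. bij_betw \<sigma> c c) \<and> (\<forall>x. x \<notin> {1..n} \<longrightarrow> \<sigma> x = x)}"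

lemma psi_G: "psi r \<in> G" unfolding G_def using psi_bij psi_out by blast

lemma id_G: "id \<in> G" unfolding G_def by (simp add: bij_betw_id)

lemma comp_G: "\<sigma> \<in> G \<Longrightarrow> \<tau> \<in> G \<Longrightarrow> \<sigma> \<circ> \<tau> \<in> G"
  unfolding G_def using bij_betw_trans by fastforce

lemma G_chain: "\<sigma> \<in> G \<Longrightarrow> c \<in> C \<Longrightarrow> x \<in> c \<Longrightarrow> \<sigma> x \<in> c"
  unfolding G_def using bij_betw_apply by fastforce

lemma G_in: assumes s: "\<sigma> \<in> G" and x: "x \<in> {1..n}" shows "\<sigma> x \<in> {1..n}"
proof -
  obtain c where c: "c \<in> C" "x \<in> c" using in_chain[OF x] by blast
  thus ?thesis using G_chain[OF s c] chain_sub[OF c(1)] by blast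
qed

lemma G_surj: assumes s: "\<sigma> \<in> G" shows "\<exists>x. \<sigma> x = y"
proof (cases "y \<in> {1..n}")
  case True
  then obtain c where c: "c \<in> C" "y \<in> c" using in_chain by blast
  have "bij_betw \<sigma> c c" using s c unfolding G_def by blast
  hence "y \<in> \<sigma> ` c" using c bij_betw_imp_surj_on by fastforce
  thus ?thesis by blast
next
  case False thus ?thesis using s unfolding G_def by blast
qed

lemma G_surj_on: assumes s: "\<sigma> \<in> G" and y: "y \<in> {1..n}" shows "\<exists>x\<in>{1..n}. \<sigma> x = y"
proof -
  obtain c where c: "c \<in> C" "y \<in> c" using in_chain[OF y] by blast
  have "bij_betw \<sigma> c c" using s c unfolding G_def by blast
  hence "y \<in> \<sigma> ` c" using c bij_betw_imp_surj_on by fastforce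
  thus ?thesis using chain_sub[OF c(1)] by blast
qed

lemma G_inj: assumes s: "\<sigma> \<in> G" shows "inj_on \<sigma> {1..n}"
proof (rule inj_onI)
  fix x y assume x: "x \<in> {1..n}" and y: "y \<in> {1..n}" and e: "\<sigma> x = \<sigma> y"
  obtain c where c: "c \<in> C" "x \<in> c" using in_chain[OF x] by blast
  obtain c' where c': "c' \<in> C" "y \<in> c'" using in_chain[OF y] by blast
  have "\<sigma> x \<in> c" "\<sigma> y \<in> c'" using G_chain[OF s] c c' by auto
  hence cc: "c = c'" using chain_uniq c c' e by metis
  have "inj_on \<sigma> c" using s c unfolding G_def bij_betw_def by blast
  thus "x = y" using c c' cc e by (meson inj_onD)
qed

lemma G_bij: "\<sigma> \<in> G \<Longrightarrow> bij_betw \<sigma> {1..n} {1..n}"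
  unfolding bij_betw_def using G_inj G_in G_surj_on by blast

lemma G_finite: "finite G"
proof -
  have "inj_on (\<lambda>\<sigma>. restrict \<sigma> {1..n}) G"
  proof (rule inj_onI)
    fix \<sigma> \<tau> assume s: "\<sigma> \<in> G" and t: "\<tau> \<in> G" and e: "restrict \<sigma> {1..n} = restrict \<tau> {1..n}"
    show "\<sigma> = \<tau>"
    proof
      fix x show "\<sigma> x = \<tau> x"
      proof (cases "x \<in> {1..n}")
        case True thus ?thesis using e by (metis restrict_apply')
      next
        case False thus ?thesis using s t unfolding G_def by simp
      qed
    qed
  qed
  moreover have "(\<lambda>\<sigma>. restrict \<sigma> {1..n}) ` G \<subseteq> {1..n} \<rightarrow>\<^sub>E {1..n}"
    using G_in by auto
  hence "finite ((\<lambda>\<sigma>. restrict \<sigma> {1..n}) ` G)"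
    by (rule finite_subset) (simp add: finite_PiE)
  ultimately show ?thesis using finite_imageD by blast
qed

end




lemma sh_sa: "x \<in> {1..Suc n} \<Longrightarrow> y \<in> {1..Suc n} \<Longrightarrow> x \<le> Suc n - k \<Longrightarrow> y \<le> Suc n - k \<Longrightarrow> x < y \<Longrightarrow> k \<le> Suc n \<Longrightarrow> sh n k x < sh n k y"
  unfolding sh_def atLeastAtMost_iff by (split if_split)+ arith
lemma sh_sb: "x \<in> {1..Suc n} \<Longrightarrow> y \<in> {1..Suc n} \<Longrightarrow> Suc n - k < x \<Longrightarrow> Suc n - k < y \<Longrightarrow> x < y \<Longrightarrow> k \<le> Suc n \<Longrightarrow> sh n k x < sh n k y"
  unfolding sh_def atLeastAtMost_iff by (split if_split)+ arith
lemma sh_sc: "x \<in> {1..Suc n} \<Longrightarrow> y \<in> {1..Suc n} \<Longrightarrow> x \<le> Suc n - k \<Longrightarrow> Suc n - k < y \<Longrightarrow> k \<le> Suc n \<Longrightarrow> sh n k y < sh n k x"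
  unfolding sh_def atLeastAtMost_iff by (split if_split)+ arith

lemma card_filter_sum: "finite A \<Longrightarrow> card {x\<in>A. Q x} = (\<Sum>x\<in>A. if Q x then 1 else 0::nat)"
  by (simp add: sum.inter_filter[symmetric])

context chdec
begin

lemma CM_cong: assumes "\<forall>t\<in>{1..n}. g t = h t"
  shows "chain_monotone P C \<rho> g = chain_monotone P C \<rho> h"
proof -
  have "\<And>c i. c \<in> C \<Longrightarrow> i \<in> c \<Longrightarrow> g i = h i" using assms chain_sub by blast
  thus ?thesis unfolding chain_monotone_def by metis
qed

definition Wt :: "(nat set \<Rightarrow> rel) \<Rightarrow> (nat \<Rightarrow> nat) \<Rightarrow> nat" where
  "Wt \<rho> g = card {\<sigma>\<in>G. chain_monotone P C \<rho> (g \<circ> \<sigma>)}"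

lemma Wt_cong: assumes e: "\<forall>t\<in>{1..n}. g t = h t" shows "Wt \<rho> g = Wt \<rho> h"
proof -
  have "\<And>\<sigma>. \<sigma> \<in> G \<Longrightarrow> chain_monotone P C \<rho> (g \<circ> \<sigma>) = chain_monotone P C \<rho> (h \<circ> \<sigma>)"
  proof -
    fix \<sigma> assume s: "\<sigma> \<in> G"
    have "\<forall>t\<in>{1..n}. (g \<circ> \<sigma>) t = (h \<circ> \<sigma>) t" using e G_in[OF s] by simp
    thus "chain_monotone P C \<rho> (g \<circ> \<sigma>) = chain_monotone P C \<rho> (h \<circ> \<sigma>)" by (rule CM_cong)
  qed
  hence "{\<sigma>\<in>G. chain_monotone P C \<rho> (g \<circ> \<sigma>)} = {\<sigma>\<in>G. chain_monotone P C \<rho> (h \<circ> \<sigma>)}" by blast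
  thus ?thesis unfolding Wt_def by simp
qed

lemma PF_comp: assumes p: "\<pi> \<in> PF n" and s: "\<sigma> \<in> G" shows "\<pi> \<circ> \<sigma> \<in> PF n"
proof -
  have v: "\<forall>t\<in>{1..n}. \<pi> t \<in> {1..n}" using PF_vals[OF p] by blast
  have e: "\<pi> \<in> extensional {1..n}" by (rule PF_ext[OF p])
  have out: "\<forall>x. x \<notin> {1..n} \<longrightarrow> \<sigma> x = x" using s unfolding G_def by blast
  have pie: "\<pi> \<circ> \<sigma> \<in> {1..n} \<rightarrow>\<^sub>E {1..n}"
  proof (rule PiE_I)
    fix x assume "x \<in> {1..n}" thus "(\<pi> \<circ> \<sigma>) x \<in> {1..n}" using v G_in[OF s] by simp
  next
    fix x assume x: "x \<notin> {1..n}" thus "(\<pi> \<circ> \<sigma>) x = undefined" using out e by (simp add: extensional_def)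
  qed
  have "\<forall>i\<in>{1..n}. card {t \<in> {1..n}. (\<pi> \<circ> \<sigma>) t \<le> i} \<ge> i"
  proof
    fix i assume i: "i \<in> {1..n}"
    have "bij_betw \<sigma> {t \<in> {1..n}. \<pi> (\<sigma> t) \<le> i} {t \<in> {1..n}. \<pi> t \<le> i}"
      by (rule bij_filter[OF G_bij[OF s]])
    hence "card {t \<in> {1..n}. (\<pi> \<circ> \<sigma>) t \<le> i} = card {t \<in> {1..n}. \<pi> t \<le> i}"
      by (simp add: bij_betw_same_card)
    thus "card {t \<in> {1..n}. (\<pi> \<circ> \<sigma>) t \<le> i} \<ge> i" using p i unfolding PF_def by simp
  qed
  thus ?thesis using pie unfolding PF_def by blast
qed

lemma Ftilde_comp: assumes f: "f \<in> Ftilde n" and s: "\<sigma> \<in> G" shows "f \<circ> \<sigma> \<in> Ftilde n"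
proof -
  have v: "\<forall>t\<in>{1..n}. f t \<in> {1..Suc n}" using Ftilde_vals[OF f] by blast
  have e: "f \<in> extensional {1..n}" by (rule Ftilde_ext[OF f])
  have out: "\<forall>x. x \<notin> {1..n} \<longrightarrow> \<sigma> x = x" using s unfolding G_def by blast
  have "f \<circ> \<sigma> \<in> {1..n} \<rightarrow>\<^sub>E {1..n+1}"
  proof (rule PiE_I)
    fix x assume "x \<in> {1..n}" thus "(f \<circ> \<sigma>) x \<in> {1..n+1}" using v G_in[OF s] by simp
  next
    fix x assume x: "x \<notin> {1..n}" thus "(f \<circ> \<sigma>) x = undefined" using out e by (simp add: extensional_def)
  qed
  thus ?thesis unfolding Ftilde_def .
qed

lemma comp_inj: assumes S: "S \<subseteq> extensional {1..n}" and s: "\<sigma> \<in> G"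
  shows "inj_on (\<lambda>g. g \<circ> \<sigma>) S"
proof (rule inj_onI)
  fix g h assume g: "g \<in> S" and h: "h \<in> S" and e: "g \<circ> \<sigma> = h \<circ> \<sigma>"
  show "g = h"
  proof
    fix y show "g y = h y"
    proof (cases "y \<in> {1..n}")
      case True
      obtain x where x: "\<sigma> x = y" using G_surj[OF s, of y] by (elim exE)
      have "(g \<circ> \<sigma>) x = (h \<circ> \<sigma>) x" using e by simp
      thus ?thesis using x by simp
    next
      case False
      have "g \<in> extensional {1..n}" "h \<in> extensional {1..n}" using subsetD[OF S g] subsetD[OF S h] by simp_all
      thus ?thesis using False extensional_arb by metis
    qed
  qed
qed

lemma double_count:
  assumes fin: "finite S" and S: "S \<subseteq> extensional {1..n}"
    and cl: "\<And>g \<sigma>. g \<in> S \<Longrightarrow> \<sigma> \<in> G \<Longrightarrow> g \<circ> \<sigma> \<in> S"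
  shows "card G * card {g\<in>S. chain_monotone P C \<rho> g} = (\<Sum>g\<in>S. Wt \<rho> g)"
proof -
  have "(\<Sum>g\<in>S. Wt \<rho> g) = (\<Sum>g\<in>S. \<Sum>\<sigma>\<in>G. if chain_monotone P C \<rho> (g \<circ> \<sigma>) then 1 else 0)"
    unfolding Wt_def using card_filter_sum[OF G_finite] by simp
  also have "\<dots> = (\<Sum>\<sigma>\<in>G. \<Sum>g\<in>S. if chain_monotone P C \<rho> (g \<circ> \<sigma>) then 1 else 0)"
    by (rule sum.swap)
  also have "\<dots> = (\<Sum>\<sigma>\<in>G. card {g\<in>S. chain_monotone P C \<rho> g})"
  proof (rule sum.cong[OF refl])
    fix \<sigma> assume s: "\<sigma> \<in> G"
    have i: "inj_on (\<lambda>g. g \<circ> \<sigma>) S" by (rule comp_inj[OF S s])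
    have "(\<lambda>g. g \<circ> \<sigma>) ` S \<subseteq> S" using cl s by blast
    hence "(\<lambda>g. g \<circ> \<sigma>) ` S = S" using endo_inj_surj[OF fin _ i] by blast
    hence b: "bij_betw (\<lambda>g. g \<circ> \<sigma>) S S" using i unfolding bij_betw_def by blast
    have "card {g\<in>S. chain_monotone P C \<rho> (g \<circ> \<sigma>)} = card {g\<in>S. chain_monotone P C \<rho> g}"
      using bij_betw_same_card[OF bij_filter[OF b, of "chain_monotone P C \<rho>"]] .
    thus "(\<Sum>g\<in>S. if chain_monotone P C \<rho> (g \<circ> \<sigma>) then 1 else 0) = card {g\<in>S. chain_monotone P C \<rho> g}"
      using card_filter_sum[OF fin, of "\<lambda>g. chain_monotone P C \<rho> (g \<circ> \<sigma>)"] by simp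
  qed
  also have "\<dots> = card G * card {g\<in>S. chain_monotone P C \<rho> g}" by simp
  finally show ?thesis by simp
qed

end




context chdec
begin

lemma Wt_shift_le:
  assumes gv: "\<forall>t\<in>{1..n}. g t \<in> {1..Suc n}" and k: "k \<le> Suc n"
  shows "Wt \<rho> g \<le> Wt \<rho> (\<lambda>t. sh n k (g t))"
proof -
  define \<theta> where "\<theta> = Suc n - k"
  define u where "u c = card {x\<in>c. \<theta> < g x}" for c
  define r where "r c = rot (\<rho> c) (card c) (u c)" for c
  define \<Psi> where "\<Psi> = psi r"
  have PsiG: "\<Psi> \<in> G" unfolding \<Psi>_def by (rule psi_G)
  let ?A = "{\<sigma>\<in>G. chain_monotone P C \<rho> (g \<circ> \<sigma>)}"
  let ?B = "{\<sigma>\<in>G. chain_monotone P C \<rho> ((\<lambda>t. sh n k (g t)) \<circ> \<sigma>)}"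
  have inj: "inj_on (\<lambda>\<sigma>. \<sigma> \<circ> \<Psi>) ?A"
  proof (rule inj_onI)
    fix \<sigma> \<tau> assume e: "\<sigma> \<circ> \<Psi> = \<tau> \<circ> \<Psi>"
    show "\<sigma> = \<tau>"
    proof
      fix y
      obtain x where x: "\<Psi> x = y" using G_surj[OF PsiG, of y] by (elim exE)
      have "(\<sigma> \<circ> \<Psi>) x = (\<tau> \<circ> \<Psi>) x" using e by simp
      thus "\<sigma> y = \<tau> y" using x by simp
    qed
  qed
  have maps: "(\<lambda>\<sigma>. \<sigma> \<circ> \<Psi>) ` ?A \<subseteq> ?B"
  proof
    fix \<tau> assume "\<tau> \<in> (\<lambda>\<sigma>. \<sigma> \<circ> \<Psi>) ` ?A"
    then obtain \<sigma> where s: "\<sigma> \<in> G" and cm: "chain_monotone P C \<rho> (g \<circ> \<sigma>)" and t: "\<tau> = \<sigma> \<circ> \<Psi>" by blast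
    have "\<tau> \<in> G" using comp_G[OF s PsiG] t by simp
    moreover have "chain_monotone P C \<rho> ((\<lambda>t. sh n k (g t)) \<circ> \<tau>)"
      unfolding chain_monotone_def
    proof (intro ballI impI)
      fix c i j assume c: "c \<in> C" and i: "i \<in> c" and j: "j \<in> c" and pij: "P i j"
      define m where "m = card c"
      define v where "v p = g (\<sigma> (ev c p))" for p
      have pq: "rank c i < rank c j" "rank c j < m" using rank_lt[OF c i j pij] rank_range[OF c j] m_def by auto
      have V: "v p \<in> {1..Suc n}" if "p < m" for p
      proof -
        have "ev c p \<in> c" using ev_in[OF c] that m_def by simp
        hence "\<sigma> (ev c p) \<in> c" using G_chain[OF s c] by simp
        hence "\<sigma> (ev c p) \<in> {1..n}" using chain_sub[OF c] by blast
        thus ?thesis using gv v_def by simp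
      qed
      have mono: "rel_holds (\<rho> c) (v p) (v q)" if "p < q" "q < m" for p q
      proof -
        have e: "ev c p \<in> c" "ev c q \<in> c" using ev_in[OF c] that m_def by auto
        have "P (ev c p) (ev c q)" using rank_iff[OF c e] rank_ev[OF c] that m_def by simp
        hence "rel_holds (\<rho> c) ((g \<circ> \<sigma>) (ev c p)) ((g \<circ> \<sigma>) (ev c q))"
          using cm c e unfolding chain_monotone_def by blast
        thus ?thesis unfolding v_def by simp
      qed
      have uu: "u c = card {p \<in> {0..<m}. \<theta> < v p}"
      proof -
        have sc: "bij_betw \<sigma> c c" using s c unfolding G_def by blast
        have "bij_betw (\<sigma> \<circ> ev c) {0..<m} c" unfolding m_def by (rule bij_betw_trans[OF ev_bij[OF c] sc])
        hence "bij_betw (\<sigma> \<circ> ev c) {p\<in>{0..<m}. \<theta> < g ((\<sigma> \<circ> ev c) p)} {x\<in>c. \<theta> < g x}"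
          by (rule bij_filter)
        hence "card {p\<in>{0..<m}. \<theta> < g ((\<sigma> \<circ> ev c) p)} = card {x\<in>c. \<theta> < g x}"
          by (rule bij_betw_same_card)
        thus ?thesis unfolding u_def v_def by simp
      qed
      have key: "rel_holds (\<rho> c) (sh n k (v ((rank c i + rot (\<rho> c) m (u c)) mod m))) (sh n k (v ((rank c j + rot (\<rho> c) m (u c)) mod m)))"
      proof (rule seq_rot[of m v "{1..Suc n}" \<theta> "sh n k" "\<rho> c" "u c" "rank c i" "rank c j"])
        show "\<And>p. p < m \<Longrightarrow> v p \<in> {1..Suc n}" using V by blast
        show "\<And>x y. x \<in> {1..Suc n} \<Longrightarrow> y \<in> {1..Suc n} \<Longrightarrow> x \<le> \<theta> \<Longrightarrow> y \<le> \<theta> \<Longrightarrow> x < y \<Longrightarrow> sh n k x < sh n k y"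
          using sh_sa k unfolding \<theta>_def by blast
        show "\<And>x y. x \<in> {1..Suc n} \<Longrightarrow> y \<in> {1..Suc n} \<Longrightarrow> \<theta> < x \<Longrightarrow> \<theta> < y \<Longrightarrow> x < y \<Longrightarrow> sh n k x < sh n k y"
          using sh_sb k unfolding \<theta>_def by blast
        show "\<And>x y. x \<in> {1..Suc n} \<Longrightarrow> y \<in> {1..Suc n} \<Longrightarrow> x \<le> \<theta> \<Longrightarrow> \<theta> < y \<Longrightarrow> sh n k y < sh n k x"
          using sh_sc k unfolding \<theta>_def by blast
        show "\<And>p q. p < q \<Longrightarrow> q < m \<Longrightarrow> rel_holds (\<rho> c) (v p) (v q)" using mono by blast
        show "u c = card {p \<in> {0..<m}. \<theta> < v p}" by (rule uu)
        show "rank c i < rank c j" "rank c j < m" using pq by auto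
      qed
      have "\<Psi> i = ev c ((rank c i + r c) mod m)" "\<Psi> j = ev c ((rank c j + r c) mod m)"
        unfolding \<Psi>_def m_def using psi_on[OF c i] psi_on[OF c j] by simp_all
      hence "((\<lambda>t. sh n k (g t)) \<circ> \<tau>) i = sh n k (v ((rank c i + rot (\<rho> c) m (u c)) mod m))"
            "((\<lambda>t. sh n k (g t)) \<circ> \<tau>) j = sh n k (v ((rank c j + rot (\<rho> c) m (u c)) mod m))"
        unfolding t v_def r_def m_def by simp_all
      thus "rel_holds (\<rho> c) (((\<lambda>t. sh n k (g t)) \<circ> \<tau>) i) (((\<lambda>t. sh n k (g t)) \<circ> \<tau>) j)"
        using key by simp
    qed
    ultimately show "\<tau> \<in> ?B" by blast
  qed
  have "finite ?B" using G_finite by simp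
  hence "card ?A \<le> card ?B" using card_inj_on_le[OF inj maps] by blast
  thus ?thesis unfolding Wt_def .
qed

lemma Wt_shift:
  assumes gv: "\<forall>t\<in>{1..n}. g t \<in> {1..Suc n}" and k: "k \<le> Suc n"
  shows "Wt \<rho> (\<lambda>t. sh n k (g t)) = Wt \<rho> g"
proof -
  have g'v: "\<forall>t\<in>{1..n}. sh n k (g t) \<in> {1..Suc n}" using gv sh_range k by blast
  have "Wt \<rho> (\<lambda>t. sh n k (g t)) \<le> Wt \<rho> (\<lambda>t. sh n (Suc n - k) (sh n k (g t)))"
    using Wt_shift_le[OF g'v, of "Suc n - k"] by simp
  also have "\<dots> = Wt \<rho> g"
    by (rule Wt_cong) (use gv sh_inv2[OF k] in simp)
  finally show ?thesis using Wt_shift_le[OF gv k, of \<rho>] by linarith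
qed

end




lemma PF_finite: "finite (PF n)"
proof -
  have "PF n \<subseteq> {1..n} \<rightarrow>\<^sub>E {1..n}" unfolding PF_def by blast
  thus ?thesis by (rule finite_subset) (simp add: finite_PiE)
qed

lemma Ftilde_finite: "finite (Ftilde n)"
  unfolding Ftilde_def by (simp add: finite_PiE)

context chdec
begin

lemma main_count:
  "card {f\<in>Ftilde n. chain_monotone P C \<rho> f} = Suc n * card {\<pi>\<in>PF n. chain_monotone P C \<rho> \<pi>}"
proof -
  have dF: "card G * card {f\<in>Ftilde n. chain_monotone P C \<rho> f} = (\<Sum>f\<in>Ftilde n. Wt \<rho> f)"
    by (rule double_count[OF Ftilde_finite]) (use Ftilde_ext Ftilde_comp in blast)+
  have dP: "card G * card {f\<in>PF n. chain_monotone P C \<rho> f} = (\<Sum>f\<in>PF n. Wt \<rho> f)"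
    by (rule double_count[OF PF_finite]) (use PF_ext PF_comp in blast)+
  have "(\<Sum>f\<in>Ftilde n. Wt \<rho> f) = (\<Sum>x\<in>PF n \<times> {0..n}. Wt \<rho> (Phi n x))"
    by (rule sum.reindex_bij_betw[OF Phi_bij, symmetric])
  also have "\<dots> = (\<Sum>(\<pi>,k)\<in>PF n \<times> {0..n}. Wt \<rho> (Phi n (\<pi>, k)))"
    by (rule sum.cong[OF refl]) auto
  also have "\<dots> = (\<Sum>\<pi>\<in>PF n. \<Sum>k\<in>{0..n}. Wt \<rho> (Phi n (\<pi>, k)))"
    by (rule sum.cartesian_product[symmetric])
  also have "\<dots> = (\<Sum>\<pi>\<in>PF n. \<Sum>k\<in>{0..n}. Wt \<rho> \<pi>)"
  proof (rule sum.cong[OF refl], rule sum.cong[OF refl])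
    fix \<pi> k assume p: "\<pi> \<in> PF n" and k: "k \<in> {0..n}"
    have pv: "\<forall>t\<in>{1..n}. \<pi> t \<in> {1..Suc n}" using PF_vals[OF p] by fastforce
    have "Wt \<rho> (Phi n (\<pi>, k)) = Wt \<rho> (\<lambda>t. sh n k (\<pi> t))"
      by (rule Wt_cong) (simp add: Phi_def)
    also have "\<dots> = Wt \<rho> \<pi>" by (rule Wt_shift[OF pv]) (use k in simp)
    finally show "Wt \<rho> (Phi n (\<pi>, k)) = Wt \<rho> \<pi>" .
  qed
  also have "\<dots> = Suc n * (\<Sum>\<pi>\<in>PF n. Wt \<rho> \<pi>)" by (simp add: sum_distrib_left)
  finally have "card G * card {f\<in>Ftilde n. chain_monotone P C \<rho> f} = card G * (Suc n * card {f\<in>PF n. chain_monotone P C \<rho> f})"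
    using dF dP by (simp add: algebra_simps)
  moreover have "card G > 0" using G_finite id_G card_gt_0_iff by blast
  ultimately show ?thesis by simp
qed

lemma card_Ftilde: "card (Ftilde n) = Suc n * card (PF n)"
  using bij_betw_same_card[OF Phi_bij, of n] by (simp add: card_cartesian_product algebra_simps)

end

theorem theorem10:
  fixes n :: nat and P :: "nat \<Rightarrow> nat \<Rightarrow> bool" and C :: "nat set set"
    and \<rho> :: "nat set \<Rightarrow> rel"
  assumes "chain_decomposition n P C"
  shows "real (card {\<pi> \<in> PF n. chain_monotone P C \<rho> \<pi>}) / real (card (PF n))
       = real (card {f \<in> Ftilde n. chain_monotone P C \<rho> f}) / real (card (Ftilde n))"
proof -
  interpret chdec n P C using assms by unfold_locales
  show ?thesis unfolding main_count card_Ftilde of_nat_mult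
    by (rule mult_divide_mult_cancel_left[symmetric]) simp
qed


end
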